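(* Let $(V,\mathcal H,\iota,W)$ be a generalized functional theory. The dimension of the set $\iota^*(\mathcal E)$ of ensemble-state-representable densities equals $\dim V-\dim\iota^{-1}(\mathrm{span}\{\mathbb 1\})$. In particular $\iota^*(\mathcal E)$ has full dimension in $V^*$ if and only if $\iota$ is injective and $\mathbb 1$ is not in the image of $\iota$; precisely, $\mathrm{aff}(\iota^*(\mathcal E))=V^*$ if and only if $\iota^{-1}(\mathrm{span}\{\mathbb 1\})=0$.
   Context: A generalized functional theory is a tuple $(V,\mathcal H,\iota,W)$ with $V$ a finite-dimensional real vector space, $\mathcal H$ a finite-dimensional complex Hilbert space, $\iota:V\to i\mathfrak u(\mathcal H)$ a linear map into the Hermitian operators, and $W$ Hermitian. Density operators are regarded as elements of $(i\mathfrak u(\mathcal H))^*$ via the trace pairing; $\iota^*$ is the dual map. $\mathcal E$ is the set of density operators, $\mathbb 1$ the identity on $\mathcal H$, and $\mathrm{aff}$ the affine hull. *)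

theory Defs
  imports "HOL-Analysis.Analysis"
begin

definition hermitian_op :: "complex^'n^'n \<Rightarrow> bool" where
  "hermitian_op A \<longleftrightarrow> (\<forall>i j. A$i$j = cnj (A$j$i))"

definition density_op :: "complex^'n^'n \<Rightarrow> bool" where
  "density_op \<rho> \<longleftrightarrow> hermitian_op \<rho>
     \<and> (\<forall>x::complex^'n. \<exists>r::real. r \<ge> 0 \<and> (\<Sum>i\<in>UNIV. cnj (x$i) * (\<rho> *v x)$i) = of_real r)
     \<and> trace \<rho> = 1"

definition density_ops :: "(complex^'n^'n) set" where
  "density_ops = {\<rho>. density_op \<rho>}"

text \<open>Generalized functional theory (V, H, iota, W) with V = real^'k,
  H = complex^'n: iota real-linear with Hermitian values, W Hermitian.\<close>
definition gen_functional_theory :: "(real^'k \<Rightarrow> complex^'n^'n) \<Rightarrow> complex^'n^'n \<Rightarrow> bool" where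
  "gen_functional_theory \<iota> W \<longleftrightarrow> linear \<iota> \<and> (\<forall>v. hermitian_op (\<iota> v)) \<and> hermitian_op W"

text \<open>Dual map iota^* applied to a density operator rho, i.e. the functional
  v \<mapsto> tr(rho iota(v)) in V^*, written in coordinates w.r.t. the dual of the
  standard basis of V = real^'k (so V^* is identified with real^'k).\<close>
definition iota_star :: "(real^'k \<Rightarrow> complex^'n^'n) \<Rightarrow> complex^'n^'n \<Rightarrow> real^'k" where
  "iota_star \<iota> \<rho> = (\<chi> i. Re (trace (\<rho> ** \<iota> (axis i 1))))"

end

theory Submission
  imports Defs
begin

definition rk1 :: "complex^'n \<Rightarrow> complex^'n^'n" where
  "rk1 u = (\<chi> a b. u$a * cnj (u$b))"

definition qf :: "complex^'n \<Rightarrow> complex^'n^'n \<Rightarrow> complex" where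
  "qf u B = (\<Sum>k\<in>UNIV. cnj (u$k) * (\<Sum>i\<in>UNIV. B$k$i * u$i))"

lemma trace_rk1: "trace (rk1 u ** B) = qf u B"
proof -
  have "trace (rk1 u ** B) = (\<Sum>i\<in>UNIV. \<Sum>k\<in>UNIV. cnj (u$k) * (B$k$i * u$i))"
    unfolding trace_def rk1_def matrix_matrix_mult_def
    by (simp add: mult_ac)
  also have "\<dots> = (\<Sum>k\<in>UNIV. \<Sum>i\<in>UNIV. cnj (u$k) * (B$k$i * u$i))"
    by (rule sum.swap)
  also have "\<dots> = qf u B" unfolding qf_def by (simp add: sum_distrib_left)
  finally show ?thesis .
qed

lemma density_rk1:
  fixes u :: "complex^'n"
  assumes "(\<Sum>a\<in>UNIV. u$a * cnj (u$a)) = 1"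
  shows "density_op (rk1 u)"
proof -
  have h: "hermitian_op (rk1 u)" unfolding hermitian_op_def rk1_def by (simp add: mult.commute)
  have p: "\<exists>r::real. r \<ge> 0 \<and> (\<Sum>i\<in>UNIV. cnj (x$i) * (rk1 u *v x)$i) = of_real r" for x :: "complex^'n"
  proof -
    define w where "w = (\<Sum>j\<in>UNIV. cnj (u$j) * x$j)"
    have "(\<Sum>i\<in>UNIV. cnj (x$i) * (rk1 u *v x)$i) = (\<Sum>i\<in>UNIV. cnj (x$i) * u$i) * w"
      unfolding rk1_def matrix_vector_mult_def w_def
      by (simp add: sum_distrib_left sum_distrib_right mult_ac) (rule sum.swap)
    also have "(\<Sum>i\<in>UNIV. cnj (x$i) * u$i) = cnj w" unfolding w_def by (simp add: mult.commute)
    also have "cnj w * w = of_real ((cmod w)^2)" by (metis complex_norm_square mult.commute of_real_power)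
    finally show ?thesis by (metis zero_le_power2)
  qed
  have t: "trace (rk1 u) = 1" using assms unfolding trace_def rk1_def by simp
  show ?thesis using h p t unfolding density_op_def by blast
qed

lemma sum_pt1: "(\<Sum>a\<in>UNIV. (h::'n::finite\<Rightarrow>complex) a * (if a = i then \<alpha> else 0)) = h i * \<alpha>"
  by (simp add: if_distrib cong: if_cong)

lemma sum_pt2:
  fixes h :: "'n::finite \<Rightarrow> complex"
  assumes "i \<noteq> j"
  shows "(\<Sum>a\<in>UNIV. h a * (if a = i then \<alpha> else if a = j then \<beta> else 0)) = h i * \<alpha> + h j * \<beta>"
proof -
  have "(\<Sum>a\<in>UNIV. h a * (if a = i then \<alpha> else if a = j then \<beta> else 0))
      = (\<Sum>a\<in>UNIV. (if a = i then h i * \<alpha> else 0) + (if a = j then h j * \<beta> else 0))"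
    using assms by (intro sum.cong) auto
  also have "\<dots> = h i * \<alpha> + h j * \<beta>" by (simp add: sum.distrib)
  finally show ?thesis .
qed

lemma qf_pt1: "qf (\<chi> a. if a = i then \<alpha> else 0) B = cnj \<alpha> * B$i$i * \<alpha>"
proof -
  have "qf (\<chi> a. if a = i then \<alpha> else 0) B = (\<Sum>k\<in>UNIV. (B$k$i * \<alpha>) * cnj (if k = i then \<alpha> else 0))"
    unfolding qf_def by (simp add: sum_pt1 mult.commute)
  also have "\<dots> = cnj \<alpha> * B$i$i * \<alpha>"
    by (simp add: if_distrib cong: if_cong)
  finally show ?thesis .
qed

lemma qf_pt2:
  assumes "i \<noteq> j"
  shows "qf (\<chi> a. if a = i then \<alpha> else if a = j then \<beta> else 0) B
     = cnj \<alpha> * (B$i$i * \<alpha> + B$i$j * \<beta>) + cnj \<beta> * (B$j$i * \<alpha> + B$j$j * \<beta>)"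
proof -
  have e: "cnj (if k = i then \<alpha> else if k = j then \<beta> else 0) = (if k = i then cnj \<alpha> else if k = j then cnj \<beta> else 0)" for k
    by auto
  have "qf (\<chi> a. if a = i then \<alpha> else if a = j then \<beta> else 0) B
     = (\<Sum>k\<in>UNIV. (B$k$i * \<alpha> + B$k$j * \<beta>) * (if k = i then cnj \<alpha> else if k = j then cnj \<beta> else 0))"
    unfolding qf_def using assms by (simp add: sum_pt2 mult.commute e)
  also have "\<dots> = (B$i$i * \<alpha> + B$i$j * \<beta>) * cnj \<alpha> + (B$j$i * \<alpha> + B$j$j * \<beta>) * cnj \<beta>"
    using sum_pt2[OF assms] .
  finally show ?thesis by (simp add: mult.commute)
qed

lemma linear_Re_trace: "linear (\<lambda>M::complex^'n^'n. Re (trace (\<rho> ** M)))"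
proof (rule linearI)
  fix M N :: "complex^'n^'n"
  show "Re (trace (\<rho> ** (M + N))) = Re (trace (\<rho> ** M)) + Re (trace (\<rho> ** N))"
    by (simp add: matrix_add_ldistrib trace_add)
next
  fix c :: real and M :: "complex^'n^'n"
  have "trace (\<rho> ** (c *\<^sub>R M)) = of_real c * trace (\<rho> ** M)"
    unfolding trace_def matrix_matrix_mult_def vec_lambda_beta vector_scaleR_component
    by (simp add: sum_distrib_left scaleR_conv_of_real mult_ac)
  then show "Re (trace (\<rho> ** (c *\<^sub>R M))) = c *\<^sub>R Re (trace (\<rho> ** M))"
    by simp
qed

lemma linear_expand:
  fixes f :: "real^'k \<Rightarrow> real"
  assumes "linear f"
  shows "f v = (\<Sum>i\<in>UNIV. v$i * f (axis i 1))"
proof -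
  have "v = (\<Sum>i\<in>UNIV. v$i *\<^sub>R axis i 1)"
    using basis_expansion[of v] by (simp add: scalar_mult_eq_scaleR)
  then have "f v = f (\<Sum>i\<in>UNIV. v$i *\<^sub>R axis i 1)" by simp
  also have "\<dots> = (\<Sum>i\<in>UNIV. v$i * f (axis i 1))"
    using assms by (simp add: linear_sum linear_scale)
  finally show ?thesis .
qed

lemma iota_star_inner:
  assumes "linear \<iota>"
  shows "iota_star \<iota> \<rho> \<bullet> v = Re (trace (\<rho> ** \<iota> v))"
proof -
  have l: "linear (\<lambda>v. Re (trace (\<rho> ** \<iota> v)))"
    using linear_compose[OF assms linear_Re_trace] by (simp add: o_def)
  show ?thesis
    unfolding inner_vec_def iota_star_def
    using linear_expand[OF l, of v] by (simp add: mult.commute)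
qed

lemma trace_scal_id:
  fixes \<rho> :: "complex^'n^'n"
  assumes "trace \<rho> = 1"
  shows "Re (trace (\<rho> ** (c *\<^sub>R mat 1))) = c"
proof -
  have e: "(\<rho> ** (c *\<^sub>R mat 1))$i$i = of_real c * \<rho>$i$i" for i
    unfolding matrix_matrix_mult_def vec_lambda_beta vector_scaleR_component
    by (simp add: mat_def scaleR_conv_of_real if_distrib mult.commute cong: if_cong)
  have "trace (\<rho> ** (c *\<^sub>R mat 1)) = of_real c * trace \<rho>"
    unfolding trace_def by (simp add: e sum_distrib_left)
  then show ?thesis using assms by simp
qed

lemma norm_pt1: "(\<Sum>a\<in>UNIV. (\<chi> a. if a = i then \<alpha> else (0::complex))$a * cnj ((\<chi> a. if a = i then \<alpha> else 0)$a)) = \<alpha> * cnj \<alpha>"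
  by (simp add: if_distrib cong: if_cong)

lemma norm_pt2:
  assumes "i \<noteq> j"
  shows "(\<Sum>a\<in>UNIV. (\<chi> a. if a = i then \<alpha> else if a = j then \<beta> else (0::complex))$a
     * cnj ((\<chi> a. if a = i then \<alpha> else if a = j then \<beta> else 0)$a)) = \<alpha> * cnj \<alpha> + \<beta> * cnj \<beta>"
proof -
  have "(\<Sum>a\<in>UNIV. (\<chi> a. if a = i then \<alpha> else if a = j then \<beta> else (0::complex))$a
     * cnj ((\<chi> a. if a = i then \<alpha> else if a = j then \<beta> else 0)$a))
    = (\<Sum>a\<in>UNIV. (if a = i then \<alpha> * cnj \<alpha> else 0) + (if a = j then \<beta> * cnj \<beta> else 0))"
    using assms by (intro sum.cong) auto
  also have "\<dots> = \<alpha> * cnj \<alpha> + \<beta> * cnj \<beta>" by (simp add: sum.distrib)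
  finally show ?thesis .
qed

lemma key:
  fixes B :: "complex^'n^'n"
  assumes herm: "hermitian_op B"
    and H: "\<And>\<rho>. density_op \<rho> \<Longrightarrow> Re (trace (\<rho> ** B)) = Re (trace (rk1 (\<chi> a. if a = i0 then 1 else 0) ** B))"
  shows "\<exists>c::real. B = c *\<^sub>R mat 1"
proof -
  define c where "c = Re (B$i0$i0)"
  have R0: "Re (trace (rk1 (\<chi> a. if a = i0 then 1 else 0) ** B)) = c"
    unfolding trace_rk1 qf_pt1 c_def by simp
  have Cj: "B$j$i = cnj (B$i$j)" for i j using herm unfolding hermitian_op_def by blast
  have D1: "Re (B$i$i) = c" for i
  proof -
    have "density_op (rk1 (\<chi> a. if a = i then (1::complex) else 0))"
      by (rule density_rk1) (simp only: norm_pt1, simp)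
    from H[OF this] R0 show ?thesis unfolding trace_rk1 qf_pt1 by simp
  qed
  have Dh: "Im (B$i$i) = 0" for i
    using arg_cong[OF Cj[of i i], of Im] by simp
  define s where "s = complex_of_real (1 / sqrt 2)"
  have cs: "cnj s = s" unfolding s_def by simp
  have r: "(1/sqrt 2) * (1/sqrt 2) = (1/2::real)" by simp
  have ss: "s * s = 1/2" unfolding s_def of_real_mult[symmetric] r by simp
  have Off: "B$i$j = 0" if ij: "i \<noteq> j" for i j
  proof -
    have d1: "density_op (rk1 (\<chi> a. if a = i then s else if a = j then s else 0))"
      by (rule density_rk1) (simp only: norm_pt2[OF ij] cs ss, simp)
    have e1: "qf (\<chi> a. if a = i then s else if a = j then s else 0) B
       = (s * s) * (B$i$i + B$i$j + B$j$i + B$j$j)"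
      unfolding qf_pt2[OF ij] cs by (simp add: algebra_simps)
    have "Re ((1/2) * (B$i$i + B$i$j + B$j$i + B$j$j)) = c"
      using H[OF d1] R0 unfolding trace_rk1 e1 ss by simp
    then have re: "Re (B$i$j) = 0" using D1[of i] D1[of j] Cj[of i j] by simp
    have cb: "cnj (\<i> * s) = - \<i> * s" using cs by simp
    have d2: "density_op (rk1 (\<chi> a. if a = i then s else if a = j then \<i> * s else 0))"
      by (rule density_rk1) (simp only: norm_pt2[OF ij] cs cb, simp add: ss algebra_simps)
    have e2: "qf (\<chi> a. if a = i then s else if a = j then \<i> * s else 0) B
       = (s * s) * (B$i$i + \<i> * B$i$j - \<i> * B$j$i + B$j$j)"
      unfolding qf_pt2[OF ij] cs cb by (simp add: algebra_simps)
    have "Re ((1/2) * (B$i$i + \<i> * B$i$j - \<i> * B$j$i + B$j$j)) = c"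
      using H[OF d2] R0 unfolding trace_rk1 e2 ss by simp
    then have im: "Im (B$i$j) = 0" using D1[of i] D1[of j] Cj[of i j] by simp
    show ?thesis using re im by (simp add: complex_eq_iff)
  qed
  have "B = c *\<^sub>R mat 1"
    unfolding vec_eq_iff
  proof (intro allI)
    fix i j
    show "B$i$j = (c *\<^sub>R mat 1)$i$j"
    proof (cases "i = j")
      case True
      then show ?thesis using D1[of i] Dh[of i] by (simp add: mat_def complex_eq_iff)
    next
      case False
      then show ?thesis using Off[OF False] by (simp add: mat_def)
    qed
  qed
  then show ?thesis by blast
qed

theorem proposition2p12:
  fixes \<iota> :: "real^'k \<Rightarrow> complex^'n^'n" and W :: "complex^'n^'n"
  assumes "gen_functional_theory \<iota> W"
  shows "aff_dim (iota_star \<iota> ` density_ops)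
           = int (CARD('k)) - int (dim {v. \<exists>c::real. \<iota> v = c *\<^sub>R mat 1})
         \<and> ((affine hull (iota_star \<iota> ` density_ops) = UNIV)
           \<longleftrightarrow> (inj \<iota> \<and> mat 1 \<notin> range \<iota>))
         \<and> ((affine hull (iota_star \<iota> ` density_ops) = UNIV)
           \<longleftrightarrow> {v. \<exists>c::real. \<iota> v = c *\<^sub>R mat 1} = {0})"
proof -
  have lin: "linear \<iota>" and hi: "\<And>v. hermitian_op (\<iota> v)"
    using assms unfolding gen_functional_theory_def by auto
  define i0 :: 'n where "i0 = undefined"
  define \<rho>e where "\<rho>e = rk1 (\<chi> a. if a = i0 then (1::complex) else 0)"
  have de: "density_op \<rho>e" unfolding \<rho>e_def
    by (rule density_rk1) (simp only: norm_pt1, simp)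
  define S where "S = iota_star \<iota> ` density_ops"
  define a where "a = iota_star \<iota> \<rho>e"
  define K where "K = {v. \<exists>c::real. \<iota> v = c *\<^sub>R mat 1}"
  define D where "D = (\<lambda>x. x - a) ` S"
  have aS: "a \<in> S" unfolding a_def S_def density_ops_def using de by blast
  have orth: "{y \<in> UNIV. \<forall>x \<in> span D. orthogonal x y} = K"
  proof (intro set_eqI iffI)
    fix y assume "y \<in> {y \<in> UNIV. \<forall>x \<in> span D. orthogonal x y}"
    then have o: "\<forall>x\<in>D. x \<bullet> y = 0" using span_base unfolding orthogonal_def by blast
    have "Re (trace (\<rho> ** \<iota> y)) = Re (trace (rk1 (\<chi> a. if a = i0 then 1 else 0) ** \<iota> y))"
      if "density_op \<rho>" for \<rho>
    proof -
      have "iota_star \<iota> \<rho> - a \<in> D" unfolding D_def S_def density_ops_def using that by blast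
      then have "(iota_star \<iota> \<rho> - a) \<bullet> y = 0" using o by blast
      then show ?thesis unfolding inner_diff_left a_def iota_star_inner[OF lin] \<rho>e_def by simp
    qed
    then have "\<exists>c::real. \<iota> y = c *\<^sub>R mat 1" by (rule key[OF hi])
    then show "y \<in> K" unfolding K_def by blast
  next
    fix y assume "y \<in> K"
    then obtain c where c: "\<iota> y = c *\<^sub>R mat 1" unfolding K_def by blast
    have o: "x \<bullet> y = 0" if "x \<in> D" for x
    proof -
      from that obtain \<rho> where r: "density_op \<rho>" and x: "x = iota_star \<iota> \<rho> - a"
        unfolding D_def S_def density_ops_def by blast
      have t1: "trace \<rho> = 1" "trace \<rho>e = 1" using r de unfolding density_op_def by auto
      show ?thesis unfolding x inner_diff_left a_def iota_star_inner[OF lin] c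
        using trace_scal_id[OF t1(1)] trace_scal_id[OF t1(2)] by simp
    qed
    show "y \<in> {y \<in> UNIV. \<forall>x \<in> span D. orthogonal x y}"
    proof (intro CollectI conjI UNIV_I ballI)
      fix x assume "x \<in> span D"
      have "orthogonal y x"
        by (rule orthogonal_to_span[OF \<open>x \<in> span D\<close>]) (use o in \<open>auto simp: orthogonal_def inner_commute\<close>)
      then show "orthogonal x y" by (simp add: orthogonal_commute)
    qed
  qed
  have "dim {y \<in> UNIV. \<forall>x \<in> span D. orthogonal x y} + dim (span D) = dim (UNIV :: (real^'k) set)"
    by (rule dim_subspace_orthogonal_to_vectors) (auto simp: subspace_span)
  then have dsum: "dim K + dim D = CARD('k)" unfolding orth dim_span by simp
  have ad: "aff_dim S = int (dim D)" unfolding D_def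
    by (rule aff_dim_eq_dim_subtract) (rule hull_inc[OF aS])
  have A1: "aff_dim S = int CARD('k) - int (dim K)" using ad dsum by linarith
  have K0: "0 \<in> K" unfolding K_def using linear_0[OF lin] by (intro CollectI exI[of _ 0]) simp
  have A2: "(affine hull S = UNIV) \<longleftrightarrow> K = {0}"
  proof -
    have "(affine hull S = UNIV) \<longleftrightarrow> aff_dim S = int CARD('k)"
      using aff_dim_eq_full[of S] by simp
    also have "\<dots> \<longleftrightarrow> dim K = 0" using A1 by simp
    also have "\<dots> \<longleftrightarrow> K = {0}" using K0 by auto
    finally show ?thesis .
  qed
  have m0: "mat 1 \<noteq> (0::complex^'n^'n)"
  proof
    assume "mat 1 = (0::complex^'n^'n)"
    then have "(mat 1 :: complex^'n^'n)$i0$i0 = 0" by simp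
    then show False by (simp add: mat_def)
  qed
  have A3: "K = {0} \<longleftrightarrow> (inj \<iota> \<and> mat 1 \<notin> range \<iota>)"
  proof
    assume K: "K = {0}"
    have "inj \<iota>" unfolding linear_inj_iff_eq_0[OF lin]
    proof (intro allI impI)
      fix x assume "\<iota> x = 0"
      then have "x \<in> K" unfolding K_def by (intro CollectI exI[of _ 0]) simp
      then show "x = 0" using K by blast
    qed
    moreover have "mat 1 \<notin> range \<iota>"
    proof
      assume "mat 1 \<in> range \<iota>"
      then obtain v where v: "\<iota> v = mat 1" by auto
      then have "v \<in> K" unfolding K_def by (intro CollectI exI[of _ 1]) simp
      then have "v = 0" using K by blast
      then show False using v linear_0[OF lin] m0 by simp
    qed
    ultimately show "inj \<iota> \<and> mat 1 \<notin> range \<iota>" by blast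
  next
    assume H: "inj \<iota> \<and> mat 1 \<notin> range \<iota>"
    have "v = 0" if "v \<in> K" for v
    proof -
      obtain c where c: "\<iota> v = c *\<^sub>R mat 1" using \<open>v \<in> K\<close> unfolding K_def by blast
      show ?thesis
      proof (cases "c = 0")
        case True
        then have "\<iota> v = \<iota> 0" using c linear_0[OF lin] by simp
        then show ?thesis using H by (simp add: inj_eq)
      next
        case False
        have "\<iota> ((1/c) *\<^sub>R v) = mat 1" using c False linear_scale[OF lin] by simp
        then have "mat 1 \<in> range \<iota>" by (metis rangeI)
        then show ?thesis using H by blast
      qed
    qed
    then show "K = {0}" using K0 by blast
  qed
  show ?thesis using A1 A2 A3 unfolding S_def K_def by simp
qed


end
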